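(* Let $\epsilon>0$, $\delta\in(0,1)$, and $x\ge 4\epsilon$ with $xn\ge I_{max}$, and let $\mathcal{R}$ consist of $M=\frac{48x}{\epsilon^2}\ln\frac{2n}{\delta}$ independently generated random RR sets. Then with probability at least $1-\delta_2$, every $u\in V$ with $I_u\le(x-2\epsilon)n$ satisfies $\mathcal{F_R}(u)\le x-\epsilon$, where $\delta_2=n\left(\frac{\delta}{2n}\right)^{16}$.
   Context: $G=\langle V,E,w\rangle$ is a network with $n=|V|$ under the Linear Threshold or Independent Cascade model (live-edge form: LT — each node $v$ independently selects at most one incoming live edge, $(u,v)$ with probability $w_{uv}/W_v$ where $W_v=w_v+\sum_u w_{uv}$ includes a self-weight $w_v$; IC — each edge $(u,v)$ live independently with probability $w_{uv}$). $I_u$ is the expected number of nodes reachable from $u$ via live edges and $I_{max}=\max_u I_u$. A random RR set is the set of nodes that can reach a uniformly random node $v\in V$ via live edges in a freshly sampled live-edge graph. $\mathcal{F_R}(u)$ is the fraction of RR sets in $\mathcal{R}$ containing $u$. *)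

theory Defs
  imports "HOL-Probability.Probability"
begin

datatype diffusion_model = LT | IC

text \<open>LT: distribution of the in-edge chosen by node v: Some u with probability
  w u v / W v (u in V), None (no live in-edge) with probability ws v / W v, where
  W v = ws v + sum of w u v over u in V, ws v being the self-weight of v.\<close>
definition W_total :: "'a set \<Rightarrow> ('a \<Rightarrow> 'a \<Rightarrow> real) \<Rightarrow> ('a \<Rightarrow> real) \<Rightarrow> 'a \<Rightarrow> real" where
  "W_total V w ws v = ws v + (\<Sum>u\<in>V. w u v)"

definition lt_choice_pmf :: "'a set \<Rightarrow> ('a \<Rightarrow> 'a \<Rightarrow> real) \<Rightarrow> ('a \<Rightarrow> real) \<Rightarrow> 'a \<Rightarrow> 'a option pmf" where
  "lt_choice_pmf V w ws v = embed_pmf (\<lambda>c. case c of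
      None \<Rightarrow> ws v / W_total V w ws v
    | Some u \<Rightarrow> (if u \<in> V then w u v / W_total V w ws v else 0))"

definition live_edge_pmf :: "diffusion_model \<Rightarrow> 'a set \<Rightarrow> ('a \<Rightarrow> 'a \<Rightarrow> real) \<Rightarrow> ('a \<Rightarrow> real) \<Rightarrow> ('a \<times> 'a) set pmf" where
  "live_edge_pmf m V w ws = (case m of
      LT \<Rightarrow> map_pmf (\<lambda>c. {(u, v). v \<in> V \<and> c v = Some u})
                   (Pi_pmf V None (lt_choice_pmf V w ws))
    | IC \<Rightarrow> map_pmf (\<lambda>b. {e. b e})
                   (Pi_pmf (V \<times> V) False (\<lambda>(u, v). bernoulli_pmf (w u v))))"

definition reach_set :: "'a set \<Rightarrow> ('a \<times> 'a) set \<Rightarrow> 'a \<Rightarrow> 'a set" where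
  "reach_set V E u = {v \<in> V. (u, v) \<in> E\<^sup>*}"

definition influence :: "diffusion_model \<Rightarrow> 'a set \<Rightarrow> ('a \<Rightarrow> 'a \<Rightarrow> real) \<Rightarrow> ('a \<Rightarrow> real) \<Rightarrow> 'a \<Rightarrow> real" where
  "influence m V w ws u =
     measure_pmf.expectation (live_edge_pmf m V w ws) (\<lambda>E. real (card (reach_set V E u)))"

definition I_max :: "diffusion_model \<Rightarrow> 'a set \<Rightarrow> ('a \<Rightarrow> 'a \<Rightarrow> real) \<Rightarrow> ('a \<Rightarrow> real) \<Rightarrow> real" where
  "I_max m V w ws = Max (influence m V w ws ` V)"

definition rr_set_pmf :: "diffusion_model \<Rightarrow> 'a set \<Rightarrow> ('a \<Rightarrow> 'a \<Rightarrow> real) \<Rightarrow> ('a \<Rightarrow> real) \<Rightarrow> 'a set pmf" where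
  "rr_set_pmf m V w ws =
     bind_pmf (pmf_of_set V) (\<lambda>v.
       map_pmf (\<lambda>E. {u \<in> V. (u, v) \<in> E\<^sup>*}) (live_edge_pmf m V w ws))"

definition rr_collection_pmf :: "nat \<Rightarrow> diffusion_model \<Rightarrow> 'a set \<Rightarrow> ('a \<Rightarrow> 'a \<Rightarrow> real) \<Rightarrow> ('a \<Rightarrow> real) \<Rightarrow> (nat \<Rightarrow> 'a set) pmf" where
  "rr_collection_pmf M m V w ws = Pi_pmf {..<M} {} (\<lambda>_. rr_set_pmf m V w ws)"

definition frac_cover :: "nat \<Rightarrow> (nat \<Rightarrow> 'a set) \<Rightarrow> 'a \<Rightarrow> real" where
  "frac_cover M R u = real (card {i \<in> {..<M}. u \<in> R i}) / real M"

definition valid_weights :: "diffusion_model \<Rightarrow> 'a set \<Rightarrow> ('a \<Rightarrow> 'a \<Rightarrow> real) \<Rightarrow> ('a \<Rightarrow> real) \<Rightarrow> bool" where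
  "valid_weights m V w ws = (case m of
      LT \<Rightarrow> (\<forall>u\<in>V. \<forall>v\<in>V. 0 \<le> w u v) \<and> (\<forall>v\<in>V. 0 \<le> ws v \<and> 0 < W_total V w ws v)
    | IC \<Rightarrow> (\<forall>u\<in>V. \<forall>v\<in>V. 0 \<le> w u v \<and> w u v \<le> 1))"

end

theory Submission imports Defs begin


lemma exp_bound_23:
  fixes x :: real
  assumes a: "0 \<le> x" and b: "x \<le> 1/2"
  shows "exp x \<le> 1 + x + 2/3 * x\<^sup>2"
proof -
  have "suminf (\<lambda>n. inverse(fact (n+2)) * (x ^ (n + 2))) \<le> 2/3 * x\<^sup>2"
  proof -
    have "(\<lambda>n. x\<^sup>2 / 2 * (1/4) ^ n) sums (x\<^sup>2 / 2 * (1 / (1 - 1/4)))"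
      by (intro sums_mult geometric_sums) simp
    then have sumsx: "(\<lambda>n. x\<^sup>2 / 2 * (1/4) ^ n) sums (2/3 * x\<^sup>2)"
      by simp
    have "suminf (\<lambda>n. inverse(fact (n+2)) * (x ^ (n + 2))) \<le> suminf (\<lambda>n. (x\<^sup>2/2) * ((1/4)^n))"
    proof (intro suminf_le allI)
      show "inverse (fact (n + 2)) * x ^ (n + 2) \<le> (x\<^sup>2/2) * ((1/4)^n)" for n :: nat
      proof -
        have "(2::nat) * 2 ^ n \<le> fact (n + 2)"
          by (induct n) simp_all
        then have "real ((2::nat) * 2 ^ n) \<le> real_of_nat (fact (n + 2))"
          by (simp only: of_nat_le_iff)
        then have "((2::real) * 2 ^ n) \<le> fact (n + 2)"
          unfolding of_nat_fact by simp
        then have "inverse (fact (n + 2)) \<le> inverse ((2::real) * 2 ^ n)"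
          by (rule le_imp_inverse_le) simp
        then have i: "inverse (fact (n + 2)) \<le> 1/(2::real) * (1/2)^n"
          by (simp add: power_inverse [symmetric])
        have xn: "x^n \<le> (1/2)^n" by (rule power_mono) (use a b in auto)
        have "inverse (fact (n + 2)) * (x^n * x\<^sup>2) \<le> 1/2 * (1/2)^n * ((1/2)^n * x\<^sup>2)"
          by (rule mult_mono[OF i]) (rule mult_mono, simp_all add: xn a)
        also have "\<dots> = (x\<^sup>2/2) * ((1/4)^n)"
          by (simp add: power_mult_distrib[symmetric])
        finally show ?thesis
          unfolding power_add by (simp add: ac_simps del: fact_Suc)
      qed
      show "summable (\<lambda>n. inverse (fact (n + 2)) * x ^ (n + 2))"
        by (rule summable_exp [THEN summable_ignore_initial_segment])
      show "summable (\<lambda>n. x\<^sup>2 / 2 * (1/4) ^ n)"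
        by (rule sums_summable [OF sumsx])
    qed
    also have "\<dots> = 2/3 * x\<^sup>2"
      by (rule sums_unique [THEN sym]) (rule sumsx)
    finally show ?thesis .
  qed
  then show ?thesis
    unfolding exp_first_two_terms by auto
qed



lemma card_as_sum: "finite I \<Longrightarrow> real (card {i\<in>I. P i}) = (\<Sum>i\<in>I. if P i then 1 else 0)"
  by (simp add: sum.If_cases Int_def conj_commute)

lemma expect_two_valued:
  fixes P :: "'b pmf" and c :: real
  shows "measure_pmf.expectation P (\<lambda>y. if y \<in> A then c else 1) = 1 + measure_pmf.prob P A * (c - 1)"
proof -
  have e: "(\<lambda>y. if y \<in> A then c else 1) = (\<lambda>y. 1 + (c - 1) * indicator A y)"
    by (auto simp: indicator_def)
  have ii: "integrable (measure_pmf P) (indicator A :: _ \<Rightarrow> real)"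
    by (intro measure_pmf.integrable_const_bound[where B=1]) auto
  show ?thesis unfolding e
    by (subst Bochner_Integration.integral_add) (auto simp: ii mult.commute)
qed

lemma chernoff_Pi:
  fixes P :: "'b pmf" and A :: "'b set" and s a :: real and M :: nat
  assumes s: "s \<ge> 0"
  shows "measure_pmf.prob (Pi_pmf {..<M} d (\<lambda>_. P)) {R. a \<le> real (card {i\<in>{..<M}. R i \<in> A})}
         \<le> exp (-s*a) * (1 + measure_pmf.prob P A * (exp s - 1))^M"
proof -
  define Q where "Q = Pi_pmf {..<M} d (\<lambda>_. P)"
  define X where "X R = real (card {i\<in>{..<M}. R i \<in> A})" for R :: "nat \<Rightarrow> 'b"
  define f where "f = (\<lambda>(i::nat) y. if y \<in> A then exp s else (1::real))"
  have prodeq: "exp (s * X R) = (\<Prod>i\<in>{..<M}. f i (R i))" for R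
  proof -
    have "exp (s * X R) = exp (\<Sum>i\<in>{..<M}. s * (if R i \<in> A then 1 else 0))"
      unfolding X_def card_as_sum[OF finite_lessThan] by (simp add: sum_distrib_left)
    also have "\<dots> = (\<Prod>i\<in>{..<M}. exp (s * (if R i \<in> A then 1 else 0)))"
      by (simp add: exp_sum)
    also have "\<dots> = (\<Prod>i\<in>{..<M}. f i (R i))"
      by (intro prod.cong) (auto simp: f_def)
    finally show ?thesis .
  qed
  have intf: "integrable (measure_pmf P) (f i)" for i
    unfolding f_def by (intro measure_pmf.integrable_const_bound[where B="exp s + 1"]) auto
  have intprod: "integrable (measure_pmf Q) (\<lambda>R. \<Prod>i\<in>{..<M}. f i (R i))"
    unfolding Q_def by (intro integrable_prod_Pi_pmf intf) auto
  have "measure_pmf.prob Q {R. a \<le> X R} = measure_pmf.expectation Q (indicator {R. a \<le> X R})"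
    by simp
  also have "\<dots> \<le> measure_pmf.expectation Q (\<lambda>R. exp (-s*a) * (\<Prod>i\<in>{..<M}. f i (R i)))"
  proof (rule integral_mono)
    show "integrable (measure_pmf Q) (indicator {R. a \<le> X R} :: _ \<Rightarrow> real)"
      by (intro measure_pmf.integrable_const_bound[where B=1]) auto
    show "integrable (measure_pmf Q) (\<lambda>R. exp (-s*a) * (\<Prod>i\<in>{..<M}. f i (R i)))"
      using intprod by simp
    fix R
    have "exp (-s*a) * (\<Prod>i\<in>{..<M}. f i (R i)) = exp (s * (X R - a))"
      by (simp add: prodeq[symmetric] exp_add[symmetric] algebra_simps)
    moreover have "indicator {R. a \<le> X R} R \<le> exp (s * (X R - a))"
      using s by (auto simp: indicator_def)
    ultimately show "indicator {R. a \<le> X R} R \<le> exp (-s*a) * (\<Prod>i\<in>{..<M}. f i (R i))"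
      by simp
  qed
  also have "\<dots> = exp (-s*a) * (\<Prod>i\<in>{..<M}. measure_pmf.expectation P (f i))"
    unfolding Q_def
    by (subst integral_mult_right_zero, subst expectation_prod_Pi_pmf) (auto simp: intf[unfolded f_def] f_def)
  also have "\<dots> = exp (-s*a) * (1 + measure_pmf.prob P A * (exp s - 1))^M"
    by (simp add: f_def expect_two_valued)
  finally show ?thesis unfolding Q_def X_def .
qed



lemma prob_rr:
  assumes fin: "finite V" and ne: "V \<noteq> {}" and u: "u \<in> V"
  shows "measure_pmf.prob (rr_set_pmf m V w ws) {S. u \<in> S} = influence m V w ws u / real (card V)"
proof -
  define L where "L = live_edge_pmf m V w ws"
  define Q where "Q v = {E. (u, v) \<in> E\<^sup>*}" for v
  have "emeasure (measure_pmf (rr_set_pmf m V w ws)) {S. u \<in> S} =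
        (\<integral>\<^sup>+v. emeasure (measure_pmf (map_pmf (\<lambda>E. {u \<in> V. (u, v) \<in> E\<^sup>*}) L)) {S. u \<in> S} \<partial>measure_pmf (pmf_of_set V))"
    unfolding rr_set_pmf_def L_def by simp
  also have "\<dots> = (\<integral>\<^sup>+v. ennreal (measure_pmf.prob L (Q v)) \<partial>measure_pmf (pmf_of_set V))"
    by (intro nn_integral_cong) (simp add: u Q_def measure_pmf.emeasure_eq_measure vimage_def)
  also have "\<dots> = (\<Sum>v\<in>V. ennreal (measure_pmf.prob L (Q v))) / of_nat (card V)"
    using fin ne by (simp add: nn_integral_pmf_of_set)
  also have "\<dots> = ennreal ((\<Sum>v\<in>V. measure_pmf.prob L (Q v)) / real (card V))"
  proof -
    have "0 < real (card V)" using fin ne by (simp add: card_gt_0_iff)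
    moreover have "0 \<le> (\<Sum>v\<in>V. measure_pmf.prob L (Q v))" by (simp add: sum_nonneg)
    ultimately show ?thesis
      by (simp add: sum_ennreal divide_ennreal[symmetric] ennreal_of_nat_eq_real_of_nat[symmetric])
  qed
  finally have e1: "measure_pmf.prob (rr_set_pmf m V w ws) {S. u \<in> S} = (\<Sum>v\<in>V. measure_pmf.prob L (Q v)) / real (card V)"
    by (simp add: measure_pmf.emeasure_eq_measure sum_nonneg)
  have int: "integrable (measure_pmf L) (indicator (Q v) :: _ \<Rightarrow> real)" for v
    by (intro measure_pmf.integrable_const_bound[where B=1]) auto
  have "influence m V w ws u = measure_pmf.expectation L (\<lambda>E. \<Sum>v\<in>V. indicator (Q v) E)"
    unfolding influence_def L_def[symmetric] reach_set_def Q_def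
    by (intro Bochner_Integration.integral_cong refl) (simp add: fin indicator_def sum.If_cases Int_def conj_commute)
  also have "\<dots> = (\<Sum>v\<in>V. measure_pmf.prob L (Q v))"
    by (subst Bochner_Integration.integral_sum) (auto simp: int)
  finally show ?thesis using e1 by simp
qed


lemma tail_arith:
  fixes p q \<epsilon> x L :: real and M :: nat
  assumes e: "\<epsilon> > 0" and q: "q = x - 2 * \<epsilon>" and x: "x \<ge> 4 * \<epsilon>" and p: "0 \<le> p" "p \<le> q"
    and L: "L > 0" and M: "real M \<ge> 48 * x / \<epsilon>\<^sup>2 * L"
  shows "exp (- (2*\<epsilon>/(3*q)) * (real M * (q + \<epsilon>))) * (1 + p * (exp (2*\<epsilon>/(3*q)) - 1))^M \<le> exp (-16 * L)"
proof -
  define s where "s = 2*\<epsilon>/(3*q)"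
  have qpos: "q \<ge> 2*\<epsilon>" using q x by simp
  hence q0: "q > 0" using e by simp
  have s0: "0 \<le> s" unfolding s_def using e q0 by simp
  have s1: "s \<le> 1/2" unfolding s_def using qpos q0 e by (simp add: field_simps)
  have es: "exp s - 1 \<ge> 0" using s0 by simp
  have "(1 + p * (exp s - 1))^M \<le> (1 + q * (exp s - 1))^M"
    by (rule power_mono) (use p es in \<open>auto intro: mult_right_mono add_nonneg_nonneg mult_nonneg_nonneg\<close>)
  also have "\<dots> \<le> exp (q * (exp s - 1))^M"
    by (rule power_mono) (use q0 es in \<open>auto simp: exp_ge_add_one_self intro: add_nonneg_nonneg\<close>)
  also have "\<dots> = exp (real M * (q * (exp s - 1)))"
    by (simp add: exp_of_nat_mult)
  finally have b1: "(1 + p * (exp s - 1))^M \<le> exp (real M * (q * (exp s - 1)))" .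
  have "q * (exp s - 1) \<le> q * (s + 2/3 * s\<^sup>2)"
    using exp_bound_23[OF s0 s1] q0 by (intro mult_left_mono) auto
  hence b2: "q * (exp s - 1) - s * (q + \<epsilon>) \<le> - (10 * \<epsilon>\<^sup>2 / (27 * q))"
    unfolding s_def using q0 by (simp add: field_simps power2_eq_square)
  have "10 * \<epsilon>\<^sup>2 / (27 * q) * real M \<ge> 10 * \<epsilon>\<^sup>2 / (27 * q) * (48 * x / \<epsilon>\<^sup>2 * L)"
    using M q0 by (intro mult_left_mono) auto
  also have "10 * \<epsilon>\<^sup>2 / (27 * q) * (48 * x / \<epsilon>\<^sup>2 * L) = 480 / 27 * (x / q) * L"
    using e q0 by (simp add: field_simps power2_eq_square)
  also have "480 / 27 * (x / q) * L \<ge> 16 * L"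
  proof -
    have "x / q \<ge> 1" using q0 q e by simp
    hence "480 / 27 * (x / q) \<ge> 16" by linarith
    thus ?thesis using L by (intro mult_right_mono) auto
  qed
  finally have b3: "10 * \<epsilon>\<^sup>2 / (27 * q) * real M \<ge> 16 * L" .
  have "exp (- s * (real M * (q + \<epsilon>))) * (1 + p * (exp s - 1))^M
        \<le> exp (- s * (real M * (q + \<epsilon>))) * exp (real M * (q * (exp s - 1)))"
    using b1 by (intro mult_left_mono) auto
  also have "\<dots> = exp (real M * (q * (exp s - 1) - s * (q + \<epsilon>)))"
    by (simp add: exp_add[symmetric] algebra_simps)
  also have "\<dots> \<le> exp (real M * (- (10 * \<epsilon>\<^sup>2 / (27 * q))))"
    using b2 by (intro exp_mono mult_left_mono) auto
  also have "\<dots> \<le> exp (-16 * L)"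
    using b3 by (simp add: algebra_simps)
  finally show ?thesis unfolding s_def .
qed

theorem lemma6p5:
  fixes m :: diffusion_model and V :: "'a set"
    and w :: "'a \<Rightarrow> 'a \<Rightarrow> real" and ws :: "'a \<Rightarrow> real"
    and \<epsilon> \<delta> x :: real and M :: nat
  assumes "finite V" and "V \<noteq> {}"
    and "valid_weights m V w ws"
    and "\<epsilon> > 0" and "0 < \<delta>" and "\<delta> < 1"
    and "x \<ge> 4 * \<epsilon>"
    and "x * real (card V) \<ge> I_max m V w ws"
    and "M = nat \<lceil>48 * x / \<epsilon>\<^sup>2 * ln (2 * real (card V) / \<delta>)\<rceil>"
  shows "measure_pmf.prob (rr_collection_pmf M m V w ws)
           {R. \<forall>u\<in>V. influence m V w ws u \<le> (x - 2 * \<epsilon>) * real (card V)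
                        \<longrightarrow> frac_cover M R u \<le> x - \<epsilon>}
         \<ge> 1 - real (card V) * (\<delta> / (2 * real (card V))) ^ 16"
proof -
  note fin = assms(1) and ne = assms(2) and e = assms(4) and d0 = assms(5) and d1 = assms(6)
    and x = assms(7) and Mdef = assms(9)
  define n where "n = real (card V)"
  have n0: "n > 0" unfolding n_def using fin ne by (simp add: card_gt_0_iff)
  have n1: "n \<ge> 1" unfolding n_def using fin ne by (simp add: Suc_le_eq card_gt_0_iff)
  define L where "L = ln (2 * n / \<delta>)"
  have L0: "L > 0" unfolding L_def using n1 d0 d1 by (simp add: field_simps)
  define q where "q = x - 2 * \<epsilon>"
  have q0: "q > 0" unfolding q_def using e x by simp
  have Mge: "real M \<ge> 48 * x / \<epsilon>\<^sup>2 * L"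
    unfolding Mdef L_def n_def by linarith
  have Mpos: "real M > 0"
  proof -
    have "48 * x / \<epsilon>\<^sup>2 * L > 0" using L0 e x by (intro mult_pos_pos divide_pos_pos) auto
    thus ?thesis using Mge by linarith
  qed
  define P where "P = rr_set_pmf m V w ws"
  define Q where "Q = rr_collection_pmf M m V w ws"
  define U where "U = {u\<in>V. influence m V w ws u \<le> q * n}"
  define s where "s = 2*\<epsilon>/(3*q)"
  define B where "B u = {R. real M * (q + \<epsilon>) \<le> real (card {i\<in>{..<M}. R i \<in> {S. u \<in> S}})}" for u :: 'a
  have finU: "finite U" unfolding U_def using fin by simp
  have cardU: "real (card U) \<le> n" unfolding n_def U_def using fin by (simp add: card_mono)
  have Bbound: "measure_pmf.prob Q (B u) \<le> (\<delta> / (2 * n)) ^ 16" if u: "u \<in> U" for u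
  proof -
    have uV: "u \<in> V" using u unfolding U_def by simp
    define p where "p = measure_pmf.prob P {S. u \<in> S}"
    have p: "p = influence m V w ws u / n"
      unfolding p_def P_def n_def using prob_rr[OF fin ne uV] .
    have p0: "0 \<le> p" unfolding p_def by simp
    have pq: "p \<le> q" using u n0 unfolding p U_def by (simp add: field_simps)
    have "measure_pmf.prob Q (B u) \<le> exp (-s * (real M * (q + \<epsilon>))) * (1 + p * (exp s - 1))^M"
      unfolding Q_def rr_collection_pmf_def B_def p_def P_def
      by (rule chernoff_Pi) (use e q0 in \<open>simp add: s_def\<close>)
    also have "\<dots> \<le> exp (-16 * L)"
      unfolding s_def by (rule tail_arith[OF e q_def x p0 pq L0 Mge])
    also have "exp (-16 * L) = (\<delta> / (2 * n)) ^ 16"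
    proof -
      have "exp (-16 * L) = exp (- L) ^ 16"
        using exp_of_nat_mult[of 16 "-L"] by simp
      also have "exp (- L) = \<delta> / (2 * n)"
        unfolding L_def using n0 d0 by (simp add: exp_minus)
      finally show ?thesis .
    qed
    finally show ?thesis .
  qed
  have sub: "UNIV - (\<Union>u\<in>U. B u) \<subseteq>
      {R. \<forall>u\<in>V. influence m V w ws u \<le> (x - 2 * \<epsilon>) * real (card V) \<longrightarrow> frac_cover M R u \<le> x - \<epsilon>}"
  proof
    fix R assume R: "R \<in> UNIV - (\<Union>u\<in>U. B u)"
    show "R \<in> {R. \<forall>u\<in>V. influence m V w ws u \<le> (x - 2 * \<epsilon>) * real (card V) \<longrightarrow> frac_cover M R u \<le> x - \<epsilon>}"
    proof (intro CollectI ballI impI)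
      fix u assume "u \<in> V" "influence m V w ws u \<le> (x - 2 * \<epsilon>) * real (card V)"
      hence "u \<in> U" unfolding U_def q_def n_def by simp
      hence "R \<notin> B u" using R by auto
      hence "real (card {i\<in>{..<M}. u \<in> R i}) < real M * (q + \<epsilon>)" unfolding B_def by simp
      thus "frac_cover M R u \<le> x - \<epsilon>"
        unfolding frac_cover_def q_def using Mpos by (simp add: field_simps)
    qed
  qed
  have "1 - n * (\<delta> / (2 * n)) ^ 16 \<le> 1 - (\<Sum>u\<in>U. measure_pmf.prob Q (B u))"
  proof -
    have "(\<Sum>u\<in>U. measure_pmf.prob Q (B u)) \<le> (\<Sum>u\<in>U. (\<delta> / (2 * n)) ^ 16)"
      by (intro sum_mono Bbound)
    also have "\<dots> = real (card U) * (\<delta> / (2 * n)) ^ 16" by simp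
    also have "\<dots> \<le> n * (\<delta> / (2 * n)) ^ 16"
      using cardU d0 n0 by (intro mult_right_mono) auto
    finally show ?thesis by simp
  qed
  also have "\<dots> \<le> 1 - measure_pmf.prob Q (\<Union>u\<in>U. B u)"
    using measure_pmf.finite_measure_subadditive_finite[OF finU, of B] by simp
  also have "\<dots> = measure_pmf.prob Q (UNIV - (\<Union>u\<in>U. B u))"
    using measure_pmf.prob_compl[of "\<Union>u\<in>U. B u"] by simp
  also have "\<dots> \<le> measure_pmf.prob Q {R. \<forall>u\<in>V. influence m V w ws u \<le> (x - 2 * \<epsilon>) * real (card V) \<longrightarrow> frac_cover M R u \<le> x - \<epsilon>}"
    by (rule measure_pmf.finite_measure_mono[OF sub]) simp
  finally show ?thesis unfolding Q_def n_def .
qed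


end
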